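(* Let $\mathcal X$ be a finite set and $(F_x)_{x\in\mathcal X}$ mutually independent real random variables. Let $\epsilon>0$ and let $f_0\le f_1\le\dots\le f_l$ in $\mathbb R\cup\{\pm\infty\}$ with $f_0=-\infty$, $f_l=+\infty$, such that $\max_{x}\mathbb P[F_x\le f_1]\le2\epsilon$, $\max_x\mathbb P[F_x>f_{l-1}]\le2\epsilon$, and $\max_x\mathbb P[F_x\in(f_i,f_{i+1}]]\le2\epsilon$ for all $i=1,\dots,l-2$. Then for every $x\in\mathcal X$, $$\Big|\mathbb P[x\in X^*]-\sum_{i=0}^{l-1}\frac{g_x(f_{i+1})+g_x(f_i)}{2}\,\mathbb P[F_x\in(f_i,f_{i+1}]]\Big|\le\epsilon .$$
   Context: $X^*:=\arg\max_{z\in\mathcal X}F_z$ (a random subset), so $x\in X^*$ iff $F_x\ge F_z$ for all $z\neq x$. For $f\in\mathbb R\cup\{\pm\infty\}$, $g_x(f):=\prod_{z\in\mathcal X\setminus\{x\}}\mathbb P[F_z\le f]$ (so $g_x(-\infty)=0$, $g_x(+\infty)=1$). *)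

theory Defs
  imports "HOL-Probability.Probability"
begin

definition gfun :: "'a measure \<Rightarrow> 'i set \<Rightarrow> ('i \<Rightarrow> 'a \<Rightarrow> real) \<Rightarrow> 'i \<Rightarrow> ereal \<Rightarrow> real" where
  "gfun M X F x f = (\<Prod>z\<in>X - {x}. measure M {\<omega> \<in> space M. ereal (F z \<omega>) \<le> f})"

definition argmax_event :: "'a measure \<Rightarrow> 'i set \<Rightarrow> ('i \<Rightarrow> 'a \<Rightarrow> real) \<Rightarrow> 'i \<Rightarrow> 'a set" where
  "argmax_event M X F x = {\<omega> \<in> space M. \<forall>z\<in>X. F z \<omega> \<le> F x \<omega>}"

end

theory Submission
  imports Defs
begin

lemma mid_aux: "(b::real) \<le> P \<and> P \<le> a \<Longrightarrow> \<bar>P - (a + b) / 2\<bar> \<le> (a - b) / 2"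
  by (cases "P*2 \<le> a+b") (auto simp: abs_if field_simps)

lemma cover_aux:
  fixes f :: "nat \<Rightarrow> ereal" and v :: real
  assumes "f 0 = -\<infinity>"
  shows "n \<le> l \<Longrightarrow> ereal v \<le> f n \<Longrightarrow> \<exists>i<n. f i < ereal v \<and> ereal v \<le> f (Suc i)"
proof (induction n)
  case 0 then show ?case using assms by simp
next
  case (Suc n)
  show ?case
  proof (cases "ereal v \<le> f n")
    case True then show ?thesis using Suc by (metis Suc_leD less_Suc_eq)
  next
    case False then show ?thesis using Suc by (intro exI[of _ n]) auto
  qed
qed

lemma prod_event:
  assumes P: "prob_space M" and fin: "finite X"
    and ind: "prob_space.indep_vars M (\<lambda>_. borel) F X" and xX: "x \<in> X"
  shows "measure M {\<omega> \<in> space M. (a < ereal (F x \<omega>) \<and> ereal (F x \<omega>) \<le> b) \<and>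
            (\<forall>z\<in>X - {x}. ereal (F z \<omega>) \<le> c)}
       = measure M {\<omega> \<in> space M. a < ereal (F x \<omega>) \<and> ereal (F x \<omega>) \<le> b} * gfun M X F x c"
proof -
  interpret prob_space M by (rule P)
  define Q where "Q = (\<lambda>i (t::real). if i = x then a < ereal t \<and> ereal t \<le> b else ereal t \<le> c)"
  have "indep_events (\<lambda>i. {\<omega>\<in>space M. Q i (F i \<omega>)}) X"
    using ind by (rule indep_eventsI_indep_vars) (auto simp: Q_def)
  then have "prob (\<Inter>j\<in>X. {\<omega>\<in>space M. Q j (F j \<omega>)}) = (\<Prod>j\<in>X. prob {\<omega>\<in>space M. Q j (F j \<omega>)})"
    using fin xX unfolding indep_events_def by blast
  moreover have "(\<Inter>j\<in>X. {\<omega>\<in>space M. Q j (F j \<omega>)}) = {\<omega> \<in> space M. (a < ereal (F x \<omega>) \<and> ereal (F x \<omega>) \<le> b) \<and>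
            (\<forall>z\<in>X - {x}. ereal (F z \<omega>) \<le> c)}"
    using xX by (auto simp: Q_def)
  moreover have "(\<Prod>j\<in>X. prob {\<omega>\<in>space M. Q j (F j \<omega>)}) =
      prob {\<omega>\<in>space M. Q x (F x \<omega>)} * (\<Prod>j\<in>X-{x}. prob {\<omega>\<in>space M. Q j (F j \<omega>)})"
    using fin xX by (simp add: prod.remove)
  moreover have "(\<Prod>j\<in>X-{x}. prob {\<omega>\<in>space M. Q j (F j \<omega>)}) = gfun M X F x c"
    unfolding gfun_def by (rule prod.cong) (auto simp: Q_def)
  ultimately show ?thesis by (simp add: Q_def)
qed

theorem proposition8:
  fixes M :: "'a measure" and X :: "'i set" and F :: "'i \<Rightarrow> 'a \<Rightarrow> real"
    and \<epsilon> :: real and f :: "nat \<Rightarrow> ereal" and l :: nat and x :: 'i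
  assumes "prob_space M"
    and "finite X"
    and "prob_space.indep_vars M (\<lambda>_. borel) F X"
    and "\<epsilon> > 0"
    and "\<And>i j. i \<le> j \<Longrightarrow> j \<le> l \<Longrightarrow> f i \<le> f j"
    and "f 0 = -\<infinity>" and "f l = \<infinity>"
    and "\<forall>y\<in>X. measure M {\<omega> \<in> space M. ereal (F y \<omega>) \<le> f 1} \<le> 2 * \<epsilon>"
    and "\<forall>y\<in>X. measure M {\<omega> \<in> space M. ereal (F y \<omega>) > f (l - 1)} \<le> 2 * \<epsilon>"
    and "\<forall>i. 1 \<le> i \<and> i + 2 \<le> l \<longrightarrow> (\<forall>y\<in>X.
           measure M {\<omega> \<in> space M. f i < ereal (F y \<omega>) \<and> ereal (F y \<omega>) \<le> f (Suc i)} \<le> 2 * \<epsilon>)"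
    and "x \<in> X"
  shows "\<bar>measure M (argmax_event M X F x)
          - (\<Sum>i<l. (gfun M X F x (f (Suc i)) + gfun M X F x (f i)) / 2
                 * measure M {\<omega> \<in> space M. f i < ereal (F x \<omega>) \<and> ereal (F x \<omega>) \<le> f (Suc i)})\<bar>
         \<le> \<epsilon>"
proof -
  interpret prob_space M by (rule assms(1))
  note ind = assms(3)
  have rv: "\<And>z. z \<in> X \<Longrightarrow> F z \<in> borel_measurable M"
    using ind unfolding indep_vars_def by auto
  define g where "g = gfun M X F x"
  define B where "B = (\<lambda>i. {\<omega> \<in> space M. f i < ereal (F x \<omega>) \<and> ereal (F x \<omega>) \<le> f (Suc i)})"
  define p where "p = (\<lambda>i. measure M (B i))"
  define A where "A = (\<lambda>i. argmax_event M X F x \<inter> B i)"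
  have l1: "l \<ge> 1" using assms(6,7) by (cases l) auto
  have Bev: "\<And>i. B i \<in> events" unfolding B_def using rv[OF assms(11)] by measurable
  have Aev: "\<And>i. A i \<in> events" unfolding A_def argmax_event_def
    using Bev rv assms(11) by (intro sets.Int) (auto intro!: sets.sets_Collect_finite_All assms(2) borel_measurable_le)
  have evz: "\<And>z c. z \<in> X \<Longrightarrow> {\<omega>\<in>space M. ereal (F z \<omega>) \<le> c} \<in> events"
  proof -
    fix z c assume "z \<in> X"
    note [measurable] = rv[OF this]
    show "{\<omega>\<in>space M. ereal (F z \<omega>) \<le> c} \<in> events" by measurable
  qed
  have gmono: "\<And>a b. a \<le> b \<Longrightarrow> g a \<le> g b"
    unfolding g_def gfun_def
  proof (rule prod_mono)
    fix a b :: ereal and z assume ab: "a \<le> b" and z: "z \<in> X - {x}"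
    have "{\<omega>\<in>space M. ereal (F z \<omega>) \<le> a} \<subseteq> {\<omega>\<in>space M. ereal (F z \<omega>) \<le> b}"
      using ab by auto
    then show "0 \<le> prob {\<omega>\<in>space M. ereal (F z \<omega>) \<le> a} \<and>
      prob {\<omega>\<in>space M. ereal (F z \<omega>) \<le> a} \<le> prob {\<omega>\<in>space M. ereal (F z \<omega>) \<le> b}"
      using evz z by (simp add: finite_measure_mono)
  qed
  have g01: "\<And>a. 0 \<le> g a \<and> g a \<le> 1"
    unfolding g_def gfun_def by (auto intro!: prod_nonneg prod_le_1)
  have pbound: "\<And>i. i < l \<Longrightarrow> p i \<le> 2 * \<epsilon>"
  proof -
    fix i assume il: "i < l"
    show "p i \<le> 2 * \<epsilon>"
    proof (cases "i = 0")
      case True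
      then have "B i = {\<omega> \<in> space M. ereal (F x \<omega>) \<le> f 1}" using assms(6) by (auto simp: B_def)
      then show ?thesis using assms(8,11) by (simp add: p_def)
    next
      case i0: False
      show ?thesis
      proof (cases "i = l - 1")
        case True
        then have "Suc i = l" using il by simp
        then have "B i = {\<omega> \<in> space M. ereal (F x \<omega>) > f (l - 1)}" using assms(7) True by (auto simp: B_def)
        then show ?thesis using assms(9,11) by (simp add: p_def)
      next
        case False
        then have "1 \<le> i \<and> i + 2 \<le> l" using i0 il by auto
        then show ?thesis using assms(10,11) by (simp add: p_def B_def)
      qed
    qed
  qed
  have sand: "\<And>i. i < l \<Longrightarrow> g (f i) * p i \<le> prob (A i) \<and> prob (A i) \<le> g (f (Suc i)) * p i"
  proof -
    fix i assume il: "i < l"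
    let ?L = "{\<omega> \<in> space M. (f i < ereal (F x \<omega>) \<and> ereal (F x \<omega>) \<le> f (Suc i)) \<and>
            (\<forall>z\<in>X - {x}. ereal (F z \<omega>) \<le> f i)}"
    let ?U = "{\<omega> \<in> space M. (f i < ereal (F x \<omega>) \<and> ereal (F x \<omega>) \<le> f (Suc i)) \<and>
            (\<forall>z\<in>X - {x}. ereal (F z \<omega>) \<le> f (Suc i))}"
    have L: "prob ?L = p i * g (f i)"
      using prod_event[OF assms(1,2,3,11)] by (simp add: p_def B_def g_def)
    have U: "prob ?U = p i * g (f (Suc i))"
      using prod_event[OF assms(1,2,3,11)] by (simp add: p_def B_def g_def)
    have "?L \<subseteq> A i"
    proof
      fix \<omega> assume w: "\<omega> \<in> ?L"
      have "\<forall>z\<in>X. F z \<omega> \<le> F x \<omega>"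
      proof
        fix z assume "z \<in> X"
        show "F z \<omega> \<le> F x \<omega>"
        proof (cases "z = x")
          case False
          then have "z \<in> X - {x}" using \<open>z \<in> X\<close> by simp
          then have "ereal (F z \<omega>) \<le> f i" using w by blast
          moreover have "f i < ereal (F x \<omega>)" using w by blast
          ultimately have "ereal (F z \<omega>) < ereal (F x \<omega>)" by (rule le_less_trans)
          then show ?thesis by simp
        qed simp
      qed
      then show "\<omega> \<in> A i" using w by (auto simp: A_def B_def argmax_event_def)
    qed
    then have "prob ?L \<le> prob (A i)" using Aev by (intro finite_measure_mono) auto
    moreover have "A i \<subseteq> ?U"
    proof
      fix \<omega> assume w: "\<omega> \<in> A i"
      have "\<forall>z\<in>X - {x}. ereal (F z \<omega>) \<le> f (Suc i)"
      proof
        fix z assume "z \<in> X - {x}"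
        then have "ereal (F z \<omega>) \<le> ereal (F x \<omega>)" using w by (auto simp: A_def argmax_event_def)
        moreover have "ereal (F x \<omega>) \<le> f (Suc i)" using w by (auto simp: A_def B_def)
        ultimately show "ereal (F z \<omega>) \<le> f (Suc i)" by (rule order_trans)
      qed
      then show "\<omega> \<in> ?U" using w by (auto simp: A_def B_def)
    qed
    moreover have "?U \<in> events"
    proof (rule sets.sets_Collect_conj)
      show "{\<omega> \<in> space M. f i < ereal (F x \<omega>) \<and> ereal (F x \<omega>) \<le> f (Suc i)} \<in> sets M"
        using Bev[of i] by (simp add: B_def)
      show "{\<omega> \<in> space M. \<forall>z\<in>X - {x}. ereal (F z \<omega>) \<le> f (Suc i)} \<in> sets M"
        using evz assms(2) by (intro sets.sets_Collect_finite_All) auto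
    qed
    then have "prob (A i) \<le> prob ?U" using \<open>A i \<subseteq> ?U\<close> by (intro finite_measure_mono) auto
    ultimately show "g (f i) * p i \<le> prob (A i) \<and> prob (A i) \<le> g (f (Suc i)) * p i"
      using L U by (simp add: mult.commute)
  qed
  have disj: "disjoint_family_on A {..<l}"
  proof (clarsimp simp: disjoint_family_on_def)
    fix i j assume ij: "i < l" "j < l" "i \<noteq> j"
    show "A i \<inter> A j = {}"
    proof (rule ccontr)
      assume "A i \<inter> A j \<noteq> {}"
      then obtain \<omega> where w: "\<omega> \<in> B i" "\<omega> \<in> B j" by (auto simp: A_def)
      show False
      proof (cases "i < j")
        case True
        then have "f (Suc i) \<le> f j" using ij by (intro assms(5)) auto
        then show False using w by (auto simp: B_def)
      next
        case False
        then have "f (Suc j) \<le> f i" using ij by (intro assms(5)) auto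
        then show False using w by (auto simp: B_def)
      qed
    qed
  qed
  have cov: "argmax_event M X F x = (\<Union>i\<in>{..<l}. A i)"
  proof
    show "argmax_event M X F x \<subseteq> (\<Union>i\<in>{..<l}. A i)"
    proof
      fix \<omega> assume w: "\<omega> \<in> argmax_event M X F x"
      obtain i where "i < l" "f i < ereal (F x \<omega>) \<and> ereal (F x \<omega>) \<le> f (Suc i)"
        using cover_aux[of f l, OF assms(6), of l "F x \<omega>"] assms(7) by auto
      then show "\<omega> \<in> (\<Union>i\<in>{..<l}. A i)" using w by (auto simp: A_def B_def argmax_event_def)
    qed
  qed (auto simp: A_def)
  have sumA: "prob (argmax_event M X F x) = (\<Sum>i<l. prob (A i))"
    unfolding cov using Aev disj by (intro finite_measure_finite_Union) auto
  have "\<bar>prob (argmax_event M X F x) - (\<Sum>i<l. (g (f (Suc i)) + g (f i)) / 2 * p i)\<bar>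
        = \<bar>\<Sum>i<l. prob (A i) - (g (f (Suc i)) + g (f i)) / 2 * p i\<bar>"
    by (simp add: sumA sum_subtractf)
  also have "\<dots> \<le> (\<Sum>i<l. \<bar>prob (A i) - (g (f (Suc i)) + g (f i)) / 2 * p i\<bar>)"
    by (rule sum_abs)
  also have "\<dots> \<le> (\<Sum>i<l. (g (f (Suc i)) - g (f i)) * \<epsilon>)"
  proof (rule sum_mono)
    fix i assume "i \<in> {..<l}"
    then have il: "i < l" by simp
    have d: "0 \<le> g (f (Suc i)) - g (f i)" using gmono[OF assms(5)] il by simp
    have "(g (f (Suc i)) - g (f i)) * p i \<le> (g (f (Suc i)) - g (f i)) * (2 * \<epsilon>)"
      by (rule mult_left_mono[OF pbound[OF il] d])
    then have h: "(g (f (Suc i)) * p i - g (f i) * p i) / 2 \<le> (g (f (Suc i)) - g (f i)) * \<epsilon>"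
      by (simp add: algebra_simps field_simps)
    have e: "(g (f (Suc i)) + g (f i)) / 2 * p i = (g (f (Suc i)) * p i + g (f i) * p i) / 2"
      by (simp add: algebra_simps)
    have "\<bar>prob (A i) - (g (f (Suc i)) * p i + g (f i) * p i) / 2\<bar> \<le> (g (f (Suc i)) * p i - g (f i) * p i) / 2"
      using sand[OF il] mid_aux by blast
    then show "\<bar>prob (A i) - (g (f (Suc i)) + g (f i)) / 2 * p i\<bar> \<le> (g (f (Suc i)) - g (f i)) * \<epsilon>"
      using h e by linarith
  qed
  also have "\<dots> = (g (f l) - g (f 0)) * \<epsilon>"
    by (simp add: sum_distrib_right[symmetric] sum_lessThan_telescope[of "\<lambda>i. g (f i)"])
  also have "\<dots> \<le> 1 * \<epsilon>"
    using g01[of "f l"] g01[of "f 0"] assms(4) by (intro mult_right_mono) auto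
  finally show ?thesis by (simp add: g_def p_def B_def)
qed

end
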